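(* Let $\mathcal{C}$ be the smallest set of functions of finite arity on $[0,1]$ (i.e. functions $[0,1]^n\to[0,1]$, $n\in\mathbb{N}$) such that: (i) $\mathcal{C}$ contains all projections $p^n_i(x_0,\dots,x_{n-1})=x_i$ ($n\in\mathbb{N}$, $0\le i<n$); (ii) if $g\in\mathcal{C}$ is $n$-ary and $a\in[0,1]$, then $\chi_a(g)\colon \mathbf{x}\mapsto\chi_a(g(\mathbf{x}))$ belongs to $\mathcal{C}$; (iii) if $g_1,g_2\in\mathcal{C}$ are $n$-ary and $b\in[0,1[$, then $\mathbf{x}\mapsto \mathsf{Med}_b(g_1(\mathbf{x}),g_2(\mathbf{x}))$ belongs to $\mathcal{C}$; (iv) if $I$ is a nonempty set with $|I|\le\mathfrak{c}=2^{\aleph_0}$ and $g_i\in\mathcal{C}$, $i\in I$, are all $n$-ary, then the pointwise supremum $\mathbf{x}\mapsto\bigvee_{i\in I}g_i(\mathbf{x})$ belongs to $\mathcal{C}$. Then $\mathcal{C}=\mathsf{Agg}$, i.e. the set of all aggregation functions on $[0,1]$ is generated by the infinitary supremum operation $\bigvee$, the functions $\chi_a$, $a\in[0,1]$, and the $b$-medians $\mathsf{Med}_b$, $b\in[0,1[$.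
   Context: For $n\in\mathbb{N}$, an $n$-ary aggregation function on $[0,1]$ is a function $f\colon[0,1]^n\to[0,1]$ which is nondecreasing (not necessarily strictly) in each coordinate and satisfies $f(0,\dots,0)=0$ and $f(1,\dots,1)=1$. $\mathsf{Agg}^n$ denotes the set of all $n$-ary aggregation functions (for $n=1$ it is not restricted to the identity), and $\mathsf{Agg}=\bigcup_{n\in\mathbb{N}}\mathsf{Agg}^n$. For $a\in[0,1]$, $\chi_a\colon[0,1]\to[0,1]$ is defined by $\chi_a(x)=1$ if $x\ge a$ and $x\neq0$, and $\chi_a(x)=0$ if $x<a$ or $x=0$ (so $\chi_0$ is the characteristic function of $]0,1]$ and, for $a>0$, $\chi_a$ is the characteristic function of $[a,1]$). For $b\in[0,1]$, the $b$-median is $\mathsf{Med}_b(x,y)=\mathsf{Med}(x,y,b)$, the median of the three numbers $x,y,b$. *)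

theory Defs
  imports Main "HOL-Library.FuncSet" "HOL-Library.Cardinality" Complex_Main
begin

text \<open>An n-ary function on [0,1] is represented by a pair (n, f) where
  f :: (nat \<Rightarrow> real) \<Rightarrow> real is extensional on the cube
  [0,1]^n = PiE {..<n} (\<lambda>_. {0..1}), i.e. f takes the value undefined outside it.\<close>

definition cube :: "nat \<Rightarrow> (nat \<Rightarrow> real) set" where
  "cube n = PiE {..<n} (\<lambda>_. {0..1})"

definition chi :: "real \<Rightarrow> real \<Rightarrow> real" where
  "chi a x = (if a \<le> x \<and> x \<noteq> 0 then 1 else 0)"

definition med3 :: "real \<Rightarrow> real \<Rightarrow> real \<Rightarrow> real" where
  "med3 x y z = max (min x y) (min (max x y) z)"

definition Med :: "real \<Rightarrow> real \<Rightarrow> real \<Rightarrow> real" where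
  "Med b x y = med3 x y b"

definition agg_fun :: "nat \<Rightarrow> ((nat \<Rightarrow> real) \<Rightarrow> real) \<Rightarrow> bool" where
  "agg_fun n f \<longleftrightarrow>
     f \<in> extensional (cube n) \<and>
     f \<in> cube n \<rightarrow> {0..1} \<and>
     (\<forall>x\<in>cube n. \<forall>i<n. \<forall>t. x i \<le> t \<and> t \<le> 1 \<longrightarrow> f x \<le> f (x(i := t))) \<and>
     f (\<lambda>i\<in>{..<n}. 0) = 0 \<and>
     f (\<lambda>i\<in>{..<n}. 1) = 1"

definition Agg :: "(nat \<times> ((nat \<Rightarrow> real) \<Rightarrow> real)) set" where
  "Agg = {(n, f). agg_fun n f}"

text \<open>Index sets of cardinality at most the continuum are represented (up to bijection)
  by nonempty subsets of the reals.\<close>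

inductive_set Cgen :: "(nat \<times> ((nat \<Rightarrow> real) \<Rightarrow> real)) set" where
  proj: "i < n \<Longrightarrow> (n, restrict (\<lambda>x. x i) (cube n)) \<in> Cgen"
| chi: "(n, g) \<in> Cgen \<Longrightarrow> a \<in> {0..1} \<Longrightarrow>
        (n, restrict (\<lambda>x. chi a (g x)) (cube n)) \<in> Cgen"
| med: "(n, g1) \<in> Cgen \<Longrightarrow> (n, g2) \<in> Cgen \<Longrightarrow> 0 \<le> b \<Longrightarrow> b < 1 \<Longrightarrow>
        (n, restrict (\<lambda>x. Med b (g1 x) (g2 x)) (cube n)) \<in> Cgen"
| sup: "(I :: real set) \<noteq> {} \<Longrightarrow> (\<And>i. i \<in> I \<Longrightarrow> (n, G i) \<in> Cgen) \<Longrightarrow>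
        (n, restrict (\<lambda>x. SUP i\<in>I. G i x) (cube n)) \<in> Cgen"

end

theory Submission
  imports Defs
begin


lemma cube_upd: "x \<in> cube n \<Longrightarrow> i < n \<Longrightarrow> 0 \<le> t \<Longrightarrow> t \<le> 1 \<Longrightarrow> x(i := t) \<in> cube n"
  unfolding cube_def by (auto simp: PiE_iff extensional_def)

lemma cube_01: "x \<in> cube n \<Longrightarrow> i < n \<Longrightarrow> 0 \<le> x i \<and> x i \<le> 1"
  unfolding cube_def by (auto simp: PiE_iff)

lemma const_cube: "0 \<le> c \<Longrightarrow> c \<le> 1 \<Longrightarrow> (\<lambda>i\<in>{..<n}. c) \<in> cube n"
  unfolding cube_def by auto

lemma cube_upd': "x \<in> cube n \<Longrightarrow> i < n \<Longrightarrow> x i \<le> t \<Longrightarrow> t \<le> 1 \<Longrightarrow> x(i := t) \<in> cube n"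
  using cube_upd cube_01 by (metis order_trans)

lemma med_mono: "x \<le> x' \<Longrightarrow> y \<le> y' \<Longrightarrow> Med b x y \<le> Med b x' y'"
  unfolding Med_def med3_def by linarith

lemma Cgen_agg: "(n, g) \<in> Cgen \<Longrightarrow> agg_fun n g"
proof (induction n g rule: Cgen.induct)
  case (proj i n)
  then show ?case unfolding agg_fun_def
    by (auto simp: cube_upd' const_cube cube_01)
next
  case (chi n g a)
  have m: "chi a u \<le> chi a v" if "0 \<le> u" "u \<le> v" for u v
    using that by (auto simp: chi_def)
  have v: "\<And>x. x \<in> cube n \<Longrightarrow> 0 \<le> g x \<and> g x \<le> 1" using chi unfolding agg_fun_def by auto
  have mo: "\<And>x i t. x \<in> cube n \<Longrightarrow> i < n \<Longrightarrow> x i \<le> t \<Longrightarrow> t \<le> 1 \<Longrightarrow> g x \<le> g (x(i := t))"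
    using chi unfolding agg_fun_def by auto
  have e: "g (\<lambda>i\<in>{..<n}. 0) = 0" "g (\<lambda>i\<in>{..<n}. 1) = 1" using chi unfolding agg_fun_def by auto
  show ?case unfolding agg_fun_def
    using chi(2) v mo e by (auto simp: cube_upd' const_cube intro!: m) (auto simp: chi_def)
next
  case (med n g1 g2 b)
  have v: "\<And>x. x \<in> cube n \<Longrightarrow> 0 \<le> g1 x \<and> g1 x \<le> 1 \<and> 0 \<le> g2 x \<and> g2 x \<le> 1" using med unfolding agg_fun_def by auto
  have mo: "\<And>x i t. x \<in> cube n \<Longrightarrow> i < n \<Longrightarrow> x i \<le> t \<Longrightarrow> t \<le> 1 \<Longrightarrow> g1 x \<le> g1 (x(i := t)) \<and> g2 x \<le> g2 (x(i := t))"
    using med unfolding agg_fun_def by auto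
  have e: "g1 (\<lambda>i\<in>{..<n}. 0) = 0" "g1 (\<lambda>i\<in>{..<n}. 1) = 1" "g2 (\<lambda>i\<in>{..<n}. 0) = 0" "g2 (\<lambda>i\<in>{..<n}. 1) = 1" using med unfolding agg_fun_def by auto
  show ?case unfolding agg_fun_def
    using med(3,4) v mo e apply (auto simp: cube_upd' const_cube intro!: med_mono)
    apply (auto simp: Med_def med3_def)
    using v by fastforce+
next
  case (sup I n G)
  have bdd: "bdd_above ((\<lambda>i. G i x) ` I)" if "x \<in> cube n" for x
    using sup that unfolding agg_fun_def bdd_above_def by (auto intro!: exI[of _ 1]) (fastforce simp: Pi_iff)
  have bddb: "bdd_below ((\<lambda>i. G i x) ` I)" if "x \<in> cube n" for x
    using sup that unfolding agg_fun_def bdd_below_def by (auto intro!: exI[of _ 0]) (fastforce simp: Pi_iff)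
  have v: "0 \<le> G i x \<and> G i x \<le> 1" if "x \<in> cube n" "i \<in> I" for x i
    using sup that unfolding agg_fun_def by (fastforce simp: Pi_iff)
  have mo: "G i x \<le> G i (x(j := t))" if "x \<in> cube n" "i \<in> I" "j < n" "x j \<le> t" "t \<le> 1" for x i j t
    using sup that unfolding agg_fun_def by auto
  obtain i0 where i0: "i0 \<in> I" using sup by auto
  show ?case unfolding agg_fun_def
  proof (intro conjI)
    show "restrict (\<lambda>x. SUP i\<in>I. G i x) (cube n) \<in> cube n \<rightarrow> {0..1}"
    proof (rule Pi_I)
      fix x assume x: "x \<in> cube n"
      have "0 \<le> (SUP i\<in>I. G i x)"
        using v[OF x i0] by (intro cSUP_upper2[OF bdd[OF x] i0]) auto
      moreover have "(SUP i\<in>I. G i x) \<le> 1"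
        using v[OF x] sup(1) by (intro cSUP_least) auto
      ultimately show "restrict (\<lambda>x. SUP i\<in>I. G i x) (cube n) x \<in> {0..1}" using x by simp
    qed
  next
    show "\<forall>x\<in>cube n. \<forall>i<n. \<forall>t. x i \<le> t \<and> t \<le> 1 \<longrightarrow> restrict (\<lambda>x. SUP i\<in>I. G i x) (cube n) x
          \<le> restrict (\<lambda>x. SUP i\<in>I. G i x) (cube n) (x(i := t))"
    proof (intro ballI allI impI)
      fix x j t assume x: "x \<in> cube n" and j: "j < n" and t: "x j \<le> t \<and> t \<le> 1"
      have x': "x(j := t) \<in> cube n" using cube_01[OF x j] t by (intro cube_upd[OF x j]) auto
      have "(SUP i\<in>I. G i x) \<le> (SUP i\<in>I. G i (x(j := t)))"
        using sup(1) bdd[OF x'] mo[OF x _ j] t by (intro cSUP_mono) auto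
      then show "restrict (\<lambda>x. SUP i\<in>I. G i x) (cube n) x
          \<le> restrict (\<lambda>x. SUP i\<in>I. G i x) (cube n) (x(j := t))" using x x' by simp
    qed
  next
    have "(SUP i\<in>I. G i (\<lambda>i\<in>{..<n}. 0)) = (SUP i\<in>I. (0::real))"
      using sup unfolding agg_fun_def by (intro SUP_cong) auto
    then show "restrict (\<lambda>x. SUP i\<in>I. G i x) (cube n) (\<lambda>i\<in>{..<n}. 0) = 0"
      using sup(1) by (simp add: const_cube)
  next
    have "(SUP i\<in>I. G i (\<lambda>i\<in>{..<n}. 1)) = (SUP i\<in>I. (1::real))"
      using sup unfolding agg_fun_def by (intro SUP_cong) auto
    then show "restrict (\<lambda>x. SUP i\<in>I. G i x) (cube n) (\<lambda>i\<in>{..<n}. 1) = 1"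
      using sup(1) by (simp add: const_cube)
  qed simp
qed



lemma Cgen_ext: "(n, g) \<in> Cgen \<Longrightarrow> restrict g (cube n) = g"
  using Cgen_agg[of n g] unfolding agg_fun_def by (auto simp: extensional_restrict)

lemma Cgen_vals: "(n, g) \<in> Cgen \<Longrightarrow> x \<in> cube n \<Longrightarrow> 0 \<le> g x \<and> g x \<le> 1"
  using Cgen_agg[of n g] unfolding agg_fun_def by (auto simp: Pi_iff)

lemma Cgen_cong: "(n, g) \<in> Cgen \<Longrightarrow> (\<And>x. x \<in> cube n \<Longrightarrow> g x = F x) \<Longrightarrow> (n, restrict F (cube n)) \<in> Cgen"
proof -
  assume g: "(n, g) \<in> Cgen" and e: "\<And>x. x \<in> cube n \<Longrightarrow> g x = F x"
  have "restrict F (cube n) = restrict g (cube n)" using e by (auto simp: restrict_def)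
  then show ?thesis using Cgen_ext[OF g] g by simp
qed

lemma Cgen_min: "(n, g1) \<in> Cgen \<Longrightarrow> (n, g2) \<in> Cgen \<Longrightarrow> (n, restrict (\<lambda>x. min (g1 x) (g2 x)) (cube n)) \<in> Cgen"
proof -
  assume a: "(n, g1) \<in> Cgen" "(n, g2) \<in> Cgen"
  show ?thesis
  proof (rule Cgen_cong[OF Cgen.med[OF a, of 0]])
    fix x assume x: "x \<in> cube n"
    have "0 \<le> g1 x" "0 \<le> g2 x" using Cgen_vals[OF a(1) x] Cgen_vals[OF a(2) x] by auto
    then show "restrict (\<lambda>x. Med 0 (g1 x) (g2 x)) (cube n) x = min (g1 x) (g2 x)"
      using x by (simp add: Med_def med3_def)
  qed simp_all
qed

lemma Cgen_Min:
  assumes "finite S" "S \<noteq> {}" "\<And>i. i \<in> S \<Longrightarrow> (n, G i) \<in> Cgen"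
  shows "(n, restrict (\<lambda>x. Min ((\<lambda>i. G i x) ` S)) (cube n)) \<in> Cgen"
  using assms
proof (induction S rule: finite_ne_induct)
  case (singleton a)
  then show ?case by (intro Cgen_cong[of n "G a"]) auto
next
  case (insert a S)
  have "(n, restrict (\<lambda>x. min (G a x) (restrict (\<lambda>x. Min ((\<lambda>i. G i x) ` S)) (cube n) x)) (cube n)) \<in> Cgen"
    using insert by (intro Cgen_min) auto
  then show ?case
    by (rule Cgen_cong) (use insert in simp)
qed

definition Aind :: "nat \<Rightarrow> (nat \<Rightarrow> real) \<Rightarrow> (nat \<Rightarrow> real) \<Rightarrow> real" where
  "Aind n y = restrict (\<lambda>x. if (\<forall>i<n. y i \<le> x i) then 1 else 0) (cube n)"

lemma Aind_Cgen:
  assumes y: "y \<in> cube n" and nz: "\<exists>i<n. y i \<noteq> 0"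
  shows "(n, Aind n y) \<in> Cgen"
proof -
  define S where "S = {i. i < n \<and> y i \<noteq> 0}"
  have S: "finite S" "S \<noteq> {}" using nz by (auto simp: S_def)
  have c: "(n, restrict (\<lambda>x. chi (y i) (restrict (\<lambda>x. x i) (cube n) x)) (cube n)) \<in> Cgen" if "i \<in> S" for i
    using that cube_01[OF y] by (intro Cgen.chi Cgen.proj) (auto simp: S_def)
  have m: "(n, restrict (\<lambda>x. Min ((\<lambda>i. restrict (\<lambda>x. chi (y i) (restrict (\<lambda>x. x i) (cube n) x)) (cube n) x) ` S)) (cube n)) \<in> Cgen"
    by (rule Cgen_Min[OF S c])
  show ?thesis unfolding Aind_def
  proof (rule Cgen_cong[OF m])
    fix x assume x: "x \<in> cube n"
    have e: "Min ((\<lambda>i. restrict (\<lambda>x. chi (y i) (restrict (\<lambda>x. x i) (cube n) x)) (cube n) x) ` S)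
       = Min ((\<lambda>i. chi (y i) (x i)) ` S)" using x by (intro arg_cong[where f=Min]) auto
    have pos: "i \<in> S \<Longrightarrow> 0 < y i" for i using cube_01[OF y] by (force simp: S_def)
    show "restrict (\<lambda>x. Min ((\<lambda>i. restrict (\<lambda>x. chi (y i) (restrict (\<lambda>x. x i) (cube n) x)) (cube n) x) ` S)) (cube n) x
       = (if (\<forall>i<n. y i \<le> x i) then 1 else 0)"
    proof (cases "\<forall>i<n. y i \<le> x i")
      case True
      have "\<forall>i\<in>S. chi (y i) (x i) = 1" using True pos by (force simp: chi_def S_def)
      then have "(\<lambda>i. chi (y i) (x i)) ` S = {1}" using S by auto
      then show ?thesis using e True x by simp
    next
      case False
      then obtain j where j: "j < n" "x j < y j" by force
      then have jS: "j \<in> S" using cube_01[OF x j(1)] by (auto simp: S_def)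
      have "chi (y j) (x j) = 0" using j by (simp add: chi_def)
      moreover have "Min ((\<lambda>i. chi (y i) (x i)) ` S) \<le> chi (y j) (x j)"
        using S jS by (intro Min_le) auto
      moreover have "0 \<le> Min ((\<lambda>i. chi (y i) (x i)) ` S)"
        using S by (subst Min_ge_iff) (auto simp: chi_def)
      ultimately show ?thesis using e False x by simp
    qed
  qed
qed



lemma cube_Suc: "cube (Suc k) = (\<Union>t\<in>{0..1}. (\<lambda>z. z(k := t)) ` cube k)"
  unfolding cube_def lessThan_Suc PiE_insert_eq by auto

lemma Cgen_SUP_cube:
  "(\<And>y. y \<in> cube k \<Longrightarrow> (n, H y) \<in> Cgen) \<Longrightarrow> (n, restrict (\<lambda>x. SUP y\<in>cube k. H y x) (cube n)) \<in> Cgen"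
proof (induction k arbitrary: H)
  case 0
  have c: "cube 0 = {\<lambda>_. undefined}" unfolding cube_def by simp
  show ?case using 0 c by (intro Cgen_cong[of n "H (\<lambda>_. undefined)"]) auto
next
  case (Suc k)
  define F where "F t = restrict (\<lambda>x. SUP z\<in>cube k. H (z(k := t)) x) (cube n)" for t
  have zc: "z(k := t) \<in> cube (Suc k)" if "z \<in> cube k" "t \<in> {0..1}" for z t
    using that cube_Suc by blast
  have F: "(n, F t) \<in> Cgen" if "t \<in> {0..1}" for t
    unfolding F_def using zc that by (intro Suc.IH Suc.prems) (auto simp del: fun_upd_apply)
  have S: "(n, restrict (\<lambda>x. SUP t\<in>{0..1::real}. F t x) (cube n)) \<in> Cgen"
    by (rule Cgen.sup) (use F in auto)
  show ?case
  proof (rule Cgen_cong[OF S])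
    fix x assume x: "x \<in> cube n"
    have ne: "cube k \<noteq> {}" unfolding cube_def by (simp add: PiE_eq_empty_iff)
    have "(SUP y\<in>cube (Suc k). H y x) = (SUP y\<in>(\<Union>t\<in>{0..1}. (\<lambda>z. z(k := t)) ` cube k). H y x)"
      by (simp add: cube_Suc)
    also have "\<dots> = (SUP t\<in>{0..1::real}. SUP y\<in>(\<lambda>z. z(k := t)) ` cube k. H y x)"
    proof (rule cSUP_UNION)
      show "bdd_above (\<Union>t\<in>{0..1}. (\<lambda>y. H y x) ` (\<lambda>z. z(k := t)) ` cube k)"
        unfolding bdd_above_def using Cgen_vals[OF Suc.prems x] zc
        by (intro exI[of _ 1]) blast
    qed (use ne in auto)
    also have "\<dots> = (SUP t\<in>{0..1::real}. F t x)"
      unfolding F_def using x by (simp add: image_comp o_def)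
    finally show "restrict (\<lambda>x. SUP t\<in>{0..1::real}. F t x) (cube n) x = (SUP y\<in>cube (Suc k). H y x)"
      using x by simp
  qed
qed



lemma agg_mono:
  assumes f: "agg_fun n f" and x: "x \<in> cube n" and y: "y \<in> cube n" and le: "\<forall>i<n. y i \<le> x i"
  shows "f y \<le> f x"
proof -
  define z where "z k = (\<lambda>i. if i < k then x i else y i)" for k
  have mo: "\<And>x i t. x \<in> cube n \<Longrightarrow> i < n \<Longrightarrow> x i \<le> t \<Longrightarrow> t \<le> 1 \<Longrightarrow> f x \<le> f (x(i := t))"
    using f unfolding agg_fun_def by auto
  have "k \<le> n \<longrightarrow> z k \<in> cube n \<and> f y \<le> f (z k)" for k
  proof (induction k)
    case 0
    then show ?case using y by (simp add: z_def)
  next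
    case (Suc k)
    show ?case
    proof
      assume k: "Suc k \<le> n"
      then have zk: "z k \<in> cube n" "f y \<le> f (z k)" using Suc by auto
      have eq: "z (Suc k) = (z k)(k := x k)" by (auto simp: z_def)
      have "z k k \<le> x k" "x k \<le> 1" using le k cube_01[OF x] by (auto simp: z_def)
      then have "f (z k) \<le> f (z (Suc k))" "z (Suc k) \<in> cube n"
        using mo[OF zk(1), of k "x k"] cube_upd'[OF zk(1), of k "x k"] k eq by auto
      then show "z (Suc k) \<in> cube n \<and> f y \<le> f (z (Suc k))" using zk by auto
    qed
  qed
  moreover have "z n = x"
  proof
    fix i show "z n i = x i"
      using PiE_arb[of x "{..<n}" "\<lambda>_. {0..1::real}" i] PiE_arb[of y "{..<n}" "\<lambda>_. {0..1::real}" i] x y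
      unfolding z_def cube_def by (cases "i < n") auto
  qed
  ultimately show ?thesis by auto
qed

lemma cube_top: "x \<in> cube n \<Longrightarrow> (\<forall>i<n. 1 \<le> x i) \<longleftrightarrow> x = (\<lambda>i\<in>{..<n}. 1)"
proof
  assume x: "x \<in> cube n" and a: "\<forall>i<n. 1 \<le> x i"
  show "x = (\<lambda>i\<in>{..<n}. 1)"
  proof
    fix i show "x i = (\<lambda>i\<in>{..<n}. 1) i"
      using PiE_arb[of x "{..<n}" "\<lambda>_. {0..1::real}" i] x a cube_01[OF x, of i]
      unfolding cube_def by (cases "i < n") auto
  qed
qed auto

lemma cube_bot: "x \<in> cube n \<Longrightarrow> (\<forall>i<n. x i = 0) \<longleftrightarrow> x = (\<lambda>i\<in>{..<n}. 0)"
proof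
  assume x: "x \<in> cube n" and a: "\<forall>i<n. x i = 0"
  show "x = (\<lambda>i\<in>{..<n}. 0)"
  proof
    fix i show "x i = (\<lambda>i\<in>{..<n}. 0) i"
      using PiE_arb[of x "{..<n}" "\<lambda>_. {0..1::real}" i] x a
      unfolding cube_def by (cases "i < n") auto
  qed
qed auto

lemma agg_Cgen:
  assumes f: "agg_fun n f"
  shows "(n, f) \<in> Cgen"
proof -
  define top where "top = (\<lambda>i\<in>{..<n}. 1::real)"
  define bot where "bot = (\<lambda>i\<in>{..<n}. 0::real)"
  have top: "top \<in> cube n" and bot: "bot \<in> cube n" unfolding top_def bot_def by (auto intro: const_cube)
  have ftop: "f top = 1" and fbot: "f bot = 0" using f unfolding agg_fun_def top_def bot_def by auto
  have n: "0 < n"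
  proof (rule ccontr)
    assume "\<not> 0 < n" then have "top = bot" unfolding top_def bot_def by auto
    then show False using ftop fbot by simp
  qed
  have fv: "0 \<le> f x \<and> f x \<le> 1" if "x \<in> cube n" for x using f that unfolding agg_fun_def by auto
  have fext: "f \<in> extensional (cube n)" using f unfolding agg_fun_def by auto
  define T where "T = Aind n top"
  have TC: "(n, T) \<in> Cgen" unfolding T_def using top n by (intro Aind_Cgen) (auto simp: top_def)
  have Tx: "T x = (if x = top then 1 else 0)" if "x \<in> cube n" for x
    using that cube_top[OF that] unfolding T_def Aind_def top_def by auto
  define h where "h y = (if (\<forall>i<n. y i = 0) then T else if f y = 1 then Aind n y
     else restrict (\<lambda>x. Med (f y) (Aind n y x) (T x)) (cube n))" for y
  have h1: "h y = T" if "\<forall>i<n. y i = 0" for y unfolding h_def using if_P[OF that] by metis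
  have h2: "h y = Aind n y" if "\<not> (\<forall>i<n. y i = 0)" "f y = 1" for y
    unfolding h_def using if_not_P[OF that(1)] if_P[OF that(2)] by metis
  have h3: "h y = restrict (\<lambda>x. Med (f y) (Aind n y x) (T x)) (cube n)" if "\<not> (\<forall>i<n. y i = 0)" "f y \<noteq> 1" for y
    unfolding h_def using if_not_P[OF that(1)] if_not_P[OF that(2)] by metis
  have hC: "(n, h y) \<in> Cgen" if y: "y \<in> cube n" for y
  proof -
    consider "\<forall>i<n. y i = 0" | "\<not> (\<forall>i<n. y i = 0)" "f y = 1" | "\<not> (\<forall>i<n. y i = 0)" "f y \<noteq> 1" by blast
    then show ?thesis
    proof cases
      case 1 then show ?thesis using TC h1 by simp
    next
      case 2 then have "h y = Aind n y" by (rule h2)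
      then show ?thesis using Aind_Cgen[OF y] 2 by simp
    next
      case 3
      then have "(n, restrict (\<lambda>x. Med (f y) (Aind n y x) (T x)) (cube n)) \<in> Cgen"
        using Aind_Cgen[OF y] TC fv[OF y] by (intro Cgen.med) auto
      then show ?thesis using h3[OF 3] by simp
    qed
  qed
  have hle: "h y x \<le> f x" if y: "y \<in> cube n" and x: "x \<in> cube n" for x y
  proof -
    have A: "Aind n y x = (if (\<forall>i<n. y i \<le> x i) then 1 else 0)" using x by (simp add: Aind_def)
    have m: "(\<forall>i<n. y i \<le> x i) \<Longrightarrow> f y \<le> f x" using agg_mono[OF f x y] by blast
    have tt: "x = top \<Longrightarrow> (\<forall>i<n. y i \<le> x i)" using cube_01[OF y] by (auto simp: top_def)
    have tA: "x = top \<Longrightarrow> f x = 1" using ftop by simp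
    show ?thesis
    proof (cases "\<forall>i<n. y i = 0")
      case True
      then show ?thesis using Tx[OF x] tA fv[OF x] h1[OF True] by simp
    next
      case nz: False
      show ?thesis
      proof (cases "f y = 1")
        case True
        then show ?thesis using A m fv[OF x] h2[OF nz True] by simp
      next
        case False
        have hy: "h y x = Med (f y) (Aind n y x) (T x)" using h3[OF nz False] x by simp
        show ?thesis
        proof (cases "x = top")
          case True
          then show ?thesis unfolding hy using Tx[OF x] A tt tA fv[OF y] by (simp add: Med_def med3_def)
        next
          case nt: False
          show ?thesis unfolding hy using Tx[OF x] nt A m fv[OF x] fv[OF y]
            by (cases "\<forall>i<n. y i \<le> x i") (simp_all add: Med_def med3_def)
        qed
      qed
    qed
  qed
  have hx: "h x x = f x" if x: "x \<in> cube n" for x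
  proof -
    have A: "Aind n x x = 1" using x by (simp add: Aind_def)
    have nt: "(\<forall>i<n. x i = 0) \<Longrightarrow> x \<noteq> top" using n by (auto simp: top_def)
    have fb: "(\<forall>i<n. x i = 0) \<Longrightarrow> f x = 0" using cube_bot[OF x] fbot by (simp add: bot_def)
    show ?thesis
    proof (cases "\<forall>i<n. x i = 0")
      case True
      then show ?thesis using Tx[OF x] nt fb h1[OF True] by simp
    next
      case nz: False
      show ?thesis
      proof (cases "f x = 1")
        case True
        then show ?thesis using A h2[OF nz True] by simp
      next
        case False
        have xt: "x \<noteq> top" using False ftop by auto
        have hy: "h x x = Med (f x) (Aind n x x) (T x)" using h3[OF nz False] x by simp
        show ?thesis unfolding hy using Tx[OF x] xt A fv[OF x] by (simp add: Med_def med3_def)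
      qed
    qed
  qed
  have S: "(n, restrict (\<lambda>x. SUP y\<in>cube n. h y x) (cube n)) \<in> Cgen"
    by (rule Cgen_SUP_cube) (rule hC)
  have "restrict (\<lambda>x. SUP y\<in>cube n. h y x) (cube n) = f"
  proof (rule extensionalityI[OF _ fext])
    show "restrict (\<lambda>x. SUP y\<in>cube n. h y x) (cube n) \<in> extensional (cube n)" by simp
  next
    fix x assume x: "x \<in> cube n"
    have "(SUP y\<in>cube n. h y x) = f x"
    proof (rule antisym)
      show "(SUP y\<in>cube n. h y x) \<le> f x" using x hle by (intro cSUP_least) auto
      show "f x \<le> (SUP y\<in>cube n. h y x)"
        using hx[OF x] x hle by (intro cSUP_upper2[of _ _ x]) (auto simp: bdd_above_def)
    qed
    then show "restrict (\<lambda>x. SUP y\<in>cube n. h y x) (cube n) x = f x" using x by simp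
  qed
  then show ?thesis using S by simp
qed

theorem theorem1:
  shows "Cgen = Agg"
proof
  show "Cgen \<subseteq> Agg" using Cgen_agg by (auto simp: Agg_def)
  show "Agg \<subseteq> Cgen" using agg_Cgen by (auto simp: Agg_def)
qed


end
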